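(* Let $\Omega\subset\mathbb R^2$ be open and let $g\in W^{1,2}_{\mathrm{loc}}(\Omega,\mathbb C)$ satisfy $\bar\partial g=\mu\partial g+\nu\overline{\partial g}$ in $\Omega$, where $\mu,\nu\in L^\infty(\Omega,\mathbb C)$ satisfy $|\mu|+|\nu|\le\kappa<1$ a.e. in $\Omega$. Define $$B_{\mu,\nu}=\frac{1}{\Delta_1}\left(\begin{bmatrix}|1-\mu|^2&-2\Im(\mu-\nu)\\-2\Im(\mu+\nu)&|1+\mu|^2\end{bmatrix}-|\nu|^2 I\right),\quad \Delta_1=|1+\nu|^2-|\mu|^2,$$ $$\widetilde B_{\mu,\nu}=\frac{1}{\Delta_2}\left(\begin{bmatrix}|1-\mu|^2&-2\Im(\mu+\nu)\\-2\Im(\mu-\nu)&|1+\mu|^2\end{bmatrix}-|\nu|^2 I\right),\quad \Delta_2=|1-\nu|^2-|\mu|^2.$$ Then $\Re(g)$ is a weak solution of $\mathrm{div}(B_{\mu,\nu}\nabla w)=0$ in $\Omega$ and $\Im(g)$ is a weak solution of $\mathrm{div}(\widetilde B_{\mu,\nu}\nabla w)=0$ in $\Omega$.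
   Context: $\bar\partial=\frac12(\partial_1+i\partial_2)$, $\partial=\frac12(\partial_1-i\partial_2)$; $I$ is the $2\times2$ identity matrix. *)

theory Defs
  imports "HOL-Analysis.Analysis"
begin

text \<open>The plane R^2 is identified with the complex numbers: x = x1 + i x2.
  Partial derivatives d_1, d_2 are directional derivatives in directions 1 and i.\<close>

definition pd :: "complex \<Rightarrow> (complex \<Rightarrow> real) \<Rightarrow> complex \<Rightarrow> real" where
  "pd v \<phi> x = frechet_derivative \<phi> (at x) v"

fun iter_pd :: "complex list \<Rightarrow> (complex \<Rightarrow> real) \<Rightarrow> complex \<Rightarrow> real" where
  "iter_pd [] \<phi> = \<phi>"
| "iter_pd (v # vs) \<phi> = pd v (iter_pd vs \<phi>)"

definition smooth_fun :: "(complex \<Rightarrow> real) \<Rightarrow> bool" where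
  "smooth_fun \<phi> \<longleftrightarrow> (\<forall>vs. iter_pd vs \<phi> differentiable_on UNIV)"

definition test_fun :: "complex set \<Rightarrow> (complex \<Rightarrow> real) \<Rightarrow> bool" where
  "test_fun \<Omega> \<phi> \<longleftrightarrow> smooth_fun \<phi> \<and> compact (closure {x. \<phi> x \<noteq> 0})
      \<and> closure {x. \<phi> x \<noteq> 0} \<subseteq> \<Omega>"

definition L2_loc :: "complex set \<Rightarrow> (complex \<Rightarrow> 'b::{banach,second_countable_topology}) \<Rightarrow> bool" where
  "L2_loc \<Omega> f \<longleftrightarrow> set_borel_measurable lborel \<Omega> f \<and>
     (\<forall>K. compact K \<and> K \<subseteq> \<Omega> \<longrightarrow> set_integrable lborel K (\<lambda>x. (norm (f x))\<^sup>2))"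

definition weak_pd :: "complex set \<Rightarrow> complex \<Rightarrow> (complex \<Rightarrow> 'b::{banach,second_countable_topology})
    \<Rightarrow> (complex \<Rightarrow> 'b) \<Rightarrow> bool" where
  "weak_pd \<Omega> v f h \<longleftrightarrow> (\<forall>\<phi>. test_fun \<Omega> \<phi> \<longrightarrow>
      (LINT x:\<Omega>|lborel. pd v \<phi> x *\<^sub>R f x) = - (LINT x:\<Omega>|lborel. \<phi> x *\<^sub>R h x))"

definition W12_loc :: "complex set \<Rightarrow> (complex \<Rightarrow> 'b::{banach,second_countable_topology})
    \<Rightarrow> (complex \<Rightarrow> 'b) \<Rightarrow> (complex \<Rightarrow> 'b) \<Rightarrow> bool" where
  "W12_loc \<Omega> f h1 h2 \<longleftrightarrow> L2_loc \<Omega> f \<and> L2_loc \<Omega> h1 \<and> L2_loc \<Omega> h2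
      \<and> weak_pd \<Omega> 1 f h1 \<and> weak_pd \<Omega> \<i> f h2"

definition weak_solution :: "complex set \<Rightarrow> (complex \<Rightarrow> real^2^2) \<Rightarrow> (complex \<Rightarrow> real) \<Rightarrow> bool" where
  "weak_solution \<Omega> B w \<longleftrightarrow> (\<exists>w1 w2. W12_loc \<Omega> w w1 w2 \<and>
     (\<forall>\<phi>. test_fun \<Omega> \<phi> \<longrightarrow>
        (let F = (\<lambda>x. (B x *v vector [w1 x, w2 x]) \<bullet> (vector [pd 1 \<phi> x, pd \<i> \<phi> x] :: real^2))
         in set_integrable lborel \<Omega> F \<and> (LINT x:\<Omega>|lborel. F x) = 0)))"

definition Bmat :: "(complex \<Rightarrow> complex) \<Rightarrow> (complex \<Rightarrow> complex) \<Rightarrow> complex \<Rightarrow> real^2^2" where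
  "Bmat \<mu> \<nu> x = (let m = \<mu> x; n = \<nu> x; \<Delta>1 = (cmod (1 + n))\<^sup>2 - (cmod m)\<^sup>2 in
     (1 / \<Delta>1) *\<^sub>R (vector [vector [(cmod (1 - m))\<^sup>2, - 2 * Im (m - n)],
                            vector [- 2 * Im (m + n), (cmod (1 + m))\<^sup>2]]
                    - (cmod n)\<^sup>2 *\<^sub>R mat 1))"

definition Btilde :: "(complex \<Rightarrow> complex) \<Rightarrow> (complex \<Rightarrow> complex) \<Rightarrow> complex \<Rightarrow> real^2^2" where
  "Btilde \<mu> \<nu> x = (let m = \<mu> x; n = \<nu> x; \<Delta>2 = (cmod (1 - n))\<^sup>2 - (cmod m)\<^sup>2 in
     (1 / \<Delta>2) *\<^sub>R (vector [vector [(cmod (1 - m))\<^sup>2, - 2 * Im (m + n)],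
                            vector [- 2 * Im (m - n), (cmod (1 + m))\<^sup>2]]
                    - (cmod n)\<^sup>2 *\<^sub>R mat 1))"

end

theory Submission
  imports Defs
begin


lemma iter_pd_append: "iter_pd (vs @ [v]) f = iter_pd vs (pd v f)"
  by (induction vs) auto

lemma smooth_pd: "smooth_fun f \<Longrightarrow> smooth_fun (pd v f)"
  unfolding smooth_fun_def by (metis iter_pd_append)

lemma smooth_diff: "smooth_fun f \<Longrightarrow> iter_pd vs f differentiable (at y)"
  unfolding smooth_fun_def differentiable_on_def by auto

lemma smooth_cont: "smooth_fun f \<Longrightarrow> continuous_on UNIV f"
  unfolding smooth_fun_def using differentiable_imp_continuous_on
  by (metis iter_pd.simps(1))

lemma pd_zero_outside:
  assumes "x \<notin> closure {y. f y \<noteq> 0}"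
  shows "pd v f x = 0"
proof -
  let ?U = "- closure {y. f y \<noteq> 0}"
  have "open ?U" by auto
  have "((\<lambda>_. 0) has_derivative (\<lambda>_. 0)) (at x)" by (rule has_derivative_const)
  then have "(f has_derivative (\<lambda>_. 0)) (at x)"
    apply (rule has_derivative_transform_within_open[OF _ \<open>open ?U\<close>])
    using assms by (auto, meson closure_subset mem_Collect_eq subsetD)
  then have "frechet_derivative f (at x) = (\<lambda>_. 0)"
    using frechet_derivative_at by metis
  then show ?thesis by (simp add: pd_def)
qed

lemma supp_pd: "closure {x. pd v f x \<noteq> 0} \<subseteq> closure {x. f x \<noteq> 0}"
proof -
  have "{x. pd v f x \<noteq> 0} \<subseteq> closure {x. f x \<noteq> 0}" using pd_zero_outside by blast
  then show ?thesis by (metis closure_closure closure_mono)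
qed

lemma test_pd: "test_fun \<Omega> f \<Longrightarrow> test_fun \<Omega> (pd v f)"
proof -
  assume a: "test_fun \<Omega> f"
  have c: "compact (closure {x. f x \<noteq> 0})" and s: "closure {x. f x \<noteq> 0} \<subseteq> \<Omega>"
    using a unfolding test_fun_def by auto
  have "compact (closure {x. pd v f x \<noteq> 0})"
    using compact_Int_closed[OF c closed_closure[of "{x. pd v f x \<noteq> 0}"]] supp_pd[of v f]
    by (simp add: Int_absorb1 inf.absorb2)
  then show ?thesis using a s supp_pd[of v f] smooth_pd unfolding test_fun_def by blast
qed

lemma dir_deriv:
  assumes "f differentiable (at (y + t *\<^sub>R v))"
  shows "((\<lambda>s. f (y + s *\<^sub>R v)) has_real_derivative pd v f (y + t *\<^sub>R v)) (at t)"
proof -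
  let ?D = "frechet_derivative f (at (y + t *\<^sub>R v))"
  have D: "(f has_derivative ?D) (at (y + t *\<^sub>R v))"
    using assms frechet_derivative_works by blast
  have L: "((\<lambda>s. y + s *\<^sub>R v) has_derivative (\<lambda>h. h *\<^sub>R v)) (at t)"
    by (auto intro!: derivative_eq_intros)
  have "((f \<circ> (\<lambda>s. y + s *\<^sub>R v)) has_derivative (?D \<circ> (\<lambda>h. h *\<^sub>R v))) (at t)"
    by (rule diff_chain_at[OF L D])
  moreover have "(?D \<circ> (\<lambda>h. h *\<^sub>R v)) = (\<lambda>h. h * ?D v)"
    using has_derivative_linear[OF D] by (auto simp: linear_scale o_def)
  ultimately have "((\<lambda>s. f (y + s *\<^sub>R v)) has_derivative (\<lambda>h. h * ?D v)) (at t)"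
    by (simp add: o_def)
  moreover have "(\<lambda>h. h * ?D v) = (*) (?D v)" by (auto simp: mult.commute)
  ultimately show ?thesis
    by (simp add: has_field_derivative_def pd_def)
qed

lemma mvt_dir:
  assumes d: "\<And>z. f differentiable (at z)" and s: "s > 0"
  shows "\<exists>t. 0 < t \<and> t < s \<and> f (y + s *\<^sub>R v) - f y = s * pd v f (y + t *\<^sub>R v)"
  using MVT2[OF s, of "\<lambda>r. f (y + r *\<^sub>R v)" "\<lambda>r. pd v f (y + r *\<^sub>R v)"] dir_deriv[OF d]
  by auto

lemma mvt2_dir:
  assumes d: "\<And>z. f differentiable (at z)" and s: "s > 0"
  shows "\<exists>t. 0 < t \<and> t < s \<and> (f (y + w + s *\<^sub>R v) - f (y + s *\<^sub>R v)) - (f (y + w) - f y)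
     = s * (pd v f (y + w + t *\<^sub>R v) - pd v f (y + t *\<^sub>R v))"
proof -
  have "\<And>r. ((\<lambda>r. f (y + w + r *\<^sub>R v) - f (y + r *\<^sub>R v)) has_real_derivative
     (pd v f (y + w + r *\<^sub>R v) - pd v f (y + r *\<^sub>R v))) (at r)"
    by (intro DERIV_diff dir_deriv d)
  from MVT2[OF s, of "\<lambda>r. f (y + w + r *\<^sub>R v) - f (y + r *\<^sub>R v)", OF this]
  show ?thesis by auto
qed

lemma clairaut:
  assumes sm: "smooth_fun f"
  shows "pd \<i> (pd 1 f) x = pd 1 (pd \<i> f) x"
proof (rule ccontr)
  let ?A = "pd \<i> (pd 1 f)" and ?B = "pd 1 (pd \<i> f)"
  assume ne: "?A x \<noteq> ?B x"
  have d0: "\<And>z. f differentiable (at z)" using smooth_diff[OF sm, of "[]"] by simp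
  have d1: "\<And>z. pd 1 f differentiable (at z)" using smooth_diff[OF sm, of "[1]"] by simp
  have di: "\<And>z. pd \<i> f differentiable (at z)" using smooth_diff[OF sm, of "[\<i>]"] by simp
  have cA: "continuous (at x) ?A" using smooth_diff[OF sm, of "[\<i>,1]"]
    by (simp add: differentiable_imp_continuous_within)
  have cB: "continuous (at x) ?B" using smooth_diff[OF sm, of "[1,\<i>]"]
    by (simp add: differentiable_imp_continuous_within)
  define e where "e = \<bar>?A x - ?B x\<bar> / 2"
  have e: "e > 0" using ne by (simp add: e_def)
  obtain d where d: "d > 0" "\<And>y. dist y x < d \<Longrightarrow> dist (?A y) (?A x) < e"
    using cA e unfolding continuous_at_eps_delta by blast
  obtain d' where d': "d' > 0" "\<And>y. dist y x < d' \<Longrightarrow> dist (?B y) (?B x) < e"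
    using cB e unfolding continuous_at_eps_delta by blast
  define s where "s = min d d' / 4"
  have s: "s > 0" using d d' by (simp add: s_def)
  obtain t1 where t1: "0 < t1" "t1 < s" and
    e1: "(f (x + s *\<^sub>R \<i> + s *\<^sub>R 1) - f (x + s *\<^sub>R 1)) - (f (x + s *\<^sub>R \<i>) - f x)
      = s * (pd 1 f (x + s *\<^sub>R \<i> + t1 *\<^sub>R 1) - pd 1 f (x + t1 *\<^sub>R 1))"
    using mvt2_dir[OF d0 s, of x "s *\<^sub>R \<i>" 1] by blast
  obtain r1 where r1: "0 < r1" "r1 < s" and
    e1': "pd 1 f ((x + t1 *\<^sub>R 1) + s *\<^sub>R \<i>) - pd 1 f (x + t1 *\<^sub>R 1)
      = s * ?A ((x + t1 *\<^sub>R 1) + r1 *\<^sub>R \<i>)"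
    using mvt_dir[OF d1 s, of "x + t1 *\<^sub>R 1" \<i>] by blast
  obtain t2 where t2: "0 < t2" "t2 < s" and
    e2: "(f (x + s *\<^sub>R 1 + s *\<^sub>R \<i>) - f (x + s *\<^sub>R \<i>)) - (f (x + s *\<^sub>R 1) - f x)
      = s * (pd \<i> f (x + s *\<^sub>R 1 + t2 *\<^sub>R \<i>) - pd \<i> f (x + t2 *\<^sub>R \<i>))"
    using mvt2_dir[OF d0 s, of x "s *\<^sub>R 1" \<i>] by blast
  obtain r2 where r2: "0 < r2" "r2 < s" and
    e2': "pd \<i> f ((x + t2 *\<^sub>R \<i>) + s *\<^sub>R 1) - pd \<i> f (x + t2 *\<^sub>R \<i>)
      = s * ?B ((x + t2 *\<^sub>R \<i>) + r2 *\<^sub>R 1)"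
    using mvt_dir[OF di s, of "x + t2 *\<^sub>R \<i>" 1] by blast
  have q1: "x + s *\<^sub>R \<i> + t1 *\<^sub>R 1 = (x + t1 *\<^sub>R 1) + s *\<^sub>R \<i>" by (simp add: algebra_simps)
  have q2: "x + s *\<^sub>R 1 + t2 *\<^sub>R \<i> = (x + t2 *\<^sub>R \<i>) + s *\<^sub>R 1" by (simp add: algebra_simps)
  have q3: "x + s *\<^sub>R 1 + s *\<^sub>R \<i> = x + s *\<^sub>R \<i> + s *\<^sub>R 1" by (simp add: algebra_simps)
  have "s * (s * ?A ((x + t1 *\<^sub>R 1) + r1 *\<^sub>R \<i>)) = s * (s * ?B ((x + t2 *\<^sub>R \<i>) + r2 *\<^sub>R 1))"
    using e1 e1' e2 e2' q1 q2 q3 by (smt (verit))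
  then have eq: "?A ((x + t1 *\<^sub>R 1) + r1 *\<^sub>R \<i>) = ?B ((x + t2 *\<^sub>R \<i>) + r2 *\<^sub>R 1)"
    using s by simp
  have n1: "dist ((x + t1 *\<^sub>R 1) + r1 *\<^sub>R \<i>) x < d"
  proof -
    have "dist ((x + t1 *\<^sub>R 1) + r1 *\<^sub>R \<i>) x = norm (t1 *\<^sub>R 1 + r1 *\<^sub>R \<i>)"
      by (simp add: dist_norm)
    also have "\<dots> \<le> norm (t1 *\<^sub>R (1::complex)) + norm (r1 *\<^sub>R \<i>)" by (rule norm_triangle_ineq)
    also have "\<dots> = t1 + r1" using t1 r1 by simp
    also have "\<dots> < d" using t1 r1 d d' unfolding s_def by linarith
    finally show ?thesis .
  qed
  have n2: "dist ((x + t2 *\<^sub>R \<i>) + r2 *\<^sub>R 1) x < d'"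
  proof -
    have "dist ((x + t2 *\<^sub>R \<i>) + r2 *\<^sub>R 1) x = norm (t2 *\<^sub>R \<i> + r2 *\<^sub>R 1)"
      by (simp add: dist_norm)
    also have "\<dots> \<le> norm (t2 *\<^sub>R \<i>) + norm (r2 *\<^sub>R (1::complex))" by (rule norm_triangle_ineq)
    also have "\<dots> = t2 + r2" using t2 r2 by simp
    also have "\<dots> < d'" using t2 r2 d d' unfolding s_def by linarith
    finally show ?thesis .
  qed
  have "dist (?A x) (?B x) < e + e"
    using d(2)[OF n1] d'(2)[OF n2] eq dist_triangle3[of "?A x" "?B x"]
    by (smt (verit) dist_commute dist_triangle)
  then show False by (simp add: e_def dist_real_def)
qed

lemma le_1_sq: "(t::real) \<le> 1 + t\<^sup>2"
proof -
  have "0 \<le> (t - 1/2)\<^sup>2" by simp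
  then show ?thesis by (simp add: power2_eq_square algebra_simps)
qed

lemma L2_L1:
  assumes L: "L2_loc \<Omega> h" and K: "compact K" "K \<subseteq> \<Omega>"
  shows "set_integrable lborel K h"
proof -
  have Ks: "K \<in> sets lborel" using K by (simp add: compact_imp_closed)
  have m: "set_borel_measurable lborel K h"
    using L K(2) Ks unfolding L2_loc_def using set_borel_measurable_subset by blast
  have i2: "integrable lborel (\<lambda>x. indicator K x *\<^sub>R (norm (h x))\<^sup>2)"
    using L K unfolding L2_loc_def set_integrable_def by blast
  have i1: "integrable lborel (\<lambda>x. indicator K x *\<^sub>R (1::real))"
    by (rule borel_integrable_compact[OF K(1) continuous_on_const])
  have "integrable lborel (\<lambda>x. indicator K x *\<^sub>R (1::real) + indicator K x *\<^sub>R (norm (h x))\<^sup>2)"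
    using i1 i2 by auto
  then show ?thesis unfolding set_integrable_def
  proof (rule Bochner_Integration.integrable_bound)
    show "(\<lambda>x. indicator K x *\<^sub>R h x) \<in> borel_measurable lborel"
      using m unfolding set_borel_measurable_def .
    show "AE x in lborel. norm (indicator K x *\<^sub>R h x)
        \<le> norm (indicator K x *\<^sub>R (1::real) + indicator K x *\<^sub>R (norm (h x))\<^sup>2)"
      using le_1_sq[of "norm (h _)"] by (auto simp: indicator_def)
  qed
qed

lemma test_integrable:
  assumes T: "test_fun \<Omega> \<psi>" and L: "L2_loc \<Omega> h"
  shows "set_integrable lborel \<Omega> (\<lambda>x. \<psi> x *\<^sub>R h x)"
proof -
  define K where "K = closure {x. \<psi> x \<noteq> 0}"
  have K: "compact K" "K \<subseteq> \<Omega>" using T unfolding test_fun_def K_def by auto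
  have c: "continuous_on UNIV \<psi>" using T smooth_cont unfolding test_fun_def by blast
  have "bounded (\<psi> ` K)"
    using compact_continuous_image[OF continuous_on_subset[OF c] K(1)] compact_imp_bounded by blast
  then obtain B where B0: "B > 0" and B1: "\<forall>y\<in>\<psi> ` K. norm y \<le> B"
    unfolding bounded_pos by blast
  have B: "B > 0" "\<And>x. x \<in> K \<Longrightarrow> norm (\<psi> x) \<le> B" using B0 B1 by auto
  have iK: "integrable lborel (\<lambda>x. B *\<^sub>R (indicator K x *\<^sub>R h x))"
    by (rule integrable_scaleR_right) (use L2_L1[OF L K] in \<open>simp add: set_integrable_def\<close>)
  have mc: "\<psi> \<in> borel_measurable borel" using c by (rule borel_measurable_continuous_onI)
  have mh: "(\<lambda>x. indicator \<Omega> x *\<^sub>R h x) \<in> borel_measurable borel"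
    using L unfolding L2_loc_def set_borel_measurable_def by simp
  show ?thesis unfolding set_integrable_def
  proof (rule Bochner_Integration.integrable_bound[OF iK])
    have eq: "(\<lambda>x. indicator \<Omega> x *\<^sub>R (\<psi> x *\<^sub>R h x)) = (\<lambda>x. \<psi> x *\<^sub>R (indicator \<Omega> x *\<^sub>R h x))"
      by (auto simp: indicator_def)
    show "(\<lambda>x. indicator \<Omega> x *\<^sub>R (\<psi> x *\<^sub>R h x)) \<in> borel_measurable lborel"
      unfolding eq measurable_lborel2 by (rule borel_measurable_scaleR[OF mc mh])
    have "norm (indicator \<Omega> x *\<^sub>R (\<psi> x *\<^sub>R h x)) \<le> norm (B *\<^sub>R (indicator K x *\<^sub>R h x))" for x
    proof (cases "x \<in> K")
      case True
      then have "x \<in> \<Omega>" using K by auto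
      have "norm (indicator \<Omega> x *\<^sub>R (\<psi> x *\<^sub>R h x)) = norm (\<psi> x) * norm (h x)"
        using \<open>x \<in> \<Omega>\<close> by simp
      also have "\<dots> \<le> B * norm (h x)" by (rule mult_right_mono[OF B(2)[OF True] norm_ge_zero])
      also have "\<dots> = norm (B *\<^sub>R (indicator K x *\<^sub>R h x))" using True B(1) by simp
      finally show ?thesis .
    next
      case False
      then have "\<psi> x = 0" unfolding K_def by (meson closure_subset mem_Collect_eq subsetD)
      then show ?thesis by simp
    qed
    then show "AE x in lborel. norm (indicator \<Omega> x *\<^sub>R (\<psi> x *\<^sub>R h x)) \<le> norm (B *\<^sub>R (indicator K x *\<^sub>R h x))"
      by simp
  qed
qed

lemma set_Re:
  assumes "set_integrable M A f"
  shows "set_integrable M A (\<lambda>x. Re (f x))" "(LINT x:A|M. Re (f x)) = Re (LINT x:A|M. f x)"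
proof -
  have e: "(\<lambda>x. indicator A x *\<^sub>R Re (f x)) = (\<lambda>x. Re (indicator A x *\<^sub>R f x))" by auto
  show "set_integrable M A (\<lambda>x. Re (f x))" unfolding set_integrable_def e
    by (rule integrable_Re) (use assms in \<open>simp add: set_integrable_def\<close>)
  show "(LINT x:A|M. Re (f x)) = Re (LINT x:A|M. f x)" unfolding set_lebesgue_integral_def e
    by (rule integral_Re) (use assms in \<open>simp add: set_integrable_def\<close>)
qed

lemma set_Im:
  assumes "set_integrable M A f"
  shows "set_integrable M A (\<lambda>x. Im (f x))" "(LINT x:A|M. Im (f x)) = Im (LINT x:A|M. f x)"
proof -
  have e: "(\<lambda>x. indicator A x *\<^sub>R Im (f x)) = (\<lambda>x. Im (indicator A x *\<^sub>R f x))" by auto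
  show "set_integrable M A (\<lambda>x. Im (f x))" unfolding set_integrable_def e
    by (rule integrable_Im) (use assms in \<open>simp add: set_integrable_def\<close>)
  show "(LINT x:A|M. Im (f x)) = Im (LINT x:A|M. f x)" unfolding set_lebesgue_integral_def e
    by (rule integral_Im) (use assms in \<open>simp add: set_integrable_def\<close>)
qed

lemma L2_Re:
  assumes L: "L2_loc \<Omega> h"
  shows "L2_loc \<Omega> (\<lambda>x. Re (h x))"
proof -
  have mh[measurable]: "(\<lambda>x. indicator \<Omega> x *\<^sub>R h x) \<in> borel_measurable borel"
    using L unfolding L2_loc_def set_borel_measurable_def by simp
  have e: "(\<lambda>x. indicator \<Omega> x *\<^sub>R Re (h x)) = (\<lambda>x. Re (indicator \<Omega> x *\<^sub>R h x))" by auto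
  have m: "set_borel_measurable lborel \<Omega> (\<lambda>x. Re (h x))"
    unfolding set_borel_measurable_def e by measurable
  have "set_integrable lborel K (\<lambda>x. (norm (Re (h x)))\<^sup>2)" if K: "compact K" "K \<subseteq> \<Omega>" for K
  proof -
    have Ks[measurable]: "K \<in> sets borel" using K by (simp add: compact_imp_closed)
    have i2: "integrable lborel (\<lambda>x. indicator K x *\<^sub>R (norm (h x))\<^sup>2)"
      using L K unfolding L2_loc_def set_integrable_def by blast
    show ?thesis unfolding set_integrable_def
    proof (rule Bochner_Integration.integrable_bound[OF i2])
      have e2: "(\<lambda>x. indicator K x *\<^sub>R (norm (Re (h x)))\<^sup>2) =
          (\<lambda>x. indicator K x *\<^sub>R (norm (Re (indicator \<Omega> x *\<^sub>R h x)))\<^sup>2)"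
        using K by (intro ext) (auto simp: indicator_def)
      show "(\<lambda>x. indicator K x *\<^sub>R (norm (Re (h x)))\<^sup>2) \<in> borel_measurable lborel"
        unfolding e2 by measurable
      show "AE x in lborel. norm (indicator K x *\<^sub>R (norm (Re (h x)))\<^sup>2) \<le> norm (indicator K x *\<^sub>R (norm (h x))\<^sup>2)"
      proof -
        have sq: "(Re (h x))\<^sup>2 \<le> (cmod (h x))\<^sup>2" for x
          by (metis abs_le_square_iff abs_norm_cancel abs_Re_le_cmod)
        show ?thesis using sq by (auto simp: indicator_def)
      qed
    qed
  qed
  then show ?thesis using m unfolding L2_loc_def by blast
qed
lemma L2_Im:
  assumes L: "L2_loc \<Omega> h"
  shows "L2_loc \<Omega> (\<lambda>x. Im (h x))"
proof -
  have mh[measurable]: "(\<lambda>x. indicator \<Omega> x *\<^sub>R h x) \<in> borel_measurable borel"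
    using L unfolding L2_loc_def set_borel_measurable_def by simp
  have e: "(\<lambda>x. indicator \<Omega> x *\<^sub>R Im (h x)) = (\<lambda>x. Im (indicator \<Omega> x *\<^sub>R h x))" by auto
  have m: "set_borel_measurable lborel \<Omega> (\<lambda>x. Im (h x))"
    unfolding set_borel_measurable_def e by measurable
  have "set_integrable lborel K (\<lambda>x. (norm (Im (h x)))\<^sup>2)" if K: "compact K" "K \<subseteq> \<Omega>" for K
  proof -
    have Ks[measurable]: "K \<in> sets borel" using K by (simp add: compact_imp_closed)
    have i2: "integrable lborel (\<lambda>x. indicator K x *\<^sub>R (norm (h x))\<^sup>2)"
      using L K unfolding L2_loc_def set_integrable_def by blast
    show ?thesis unfolding set_integrable_def
    proof (rule Bochner_Integration.integrable_bound[OF i2])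
      have e2: "(\<lambda>x. indicator K x *\<^sub>R (norm (Im (h x)))\<^sup>2) =
          (\<lambda>x. indicator K x *\<^sub>R (norm (Im (indicator \<Omega> x *\<^sub>R h x)))\<^sup>2)"
        using K by (intro ext) (auto simp: indicator_def)
      show "(\<lambda>x. indicator K x *\<^sub>R (norm (Im (h x)))\<^sup>2) \<in> borel_measurable lborel"
        unfolding e2 by measurable
      show "AE x in lborel. norm (indicator K x *\<^sub>R (norm (Im (h x)))\<^sup>2) \<le> norm (indicator K x *\<^sub>R (norm (h x))\<^sup>2)"
      proof -
        have sq: "(Im (h x))\<^sup>2 \<le> (cmod (h x))\<^sup>2" for x
          by (metis abs_le_square_iff abs_norm_cancel abs_Im_le_cmod)
        show ?thesis using sq by (auto simp: indicator_def)
      qed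
    qed
  qed
  then show ?thesis using m unfolding L2_loc_def by blast
qed

lemma weak_Re:
  assumes "weak_pd \<Omega> v f h" "L2_loc \<Omega> f" "L2_loc \<Omega> h"
  shows "weak_pd \<Omega> v (\<lambda>x. Re (f x)) (\<lambda>x. Re (h x))"
  unfolding weak_pd_def
proof (intro allI impI)
  fix \<phi> assume T: "test_fun \<Omega> \<phi>"
  have i1: "set_integrable lborel \<Omega> (\<lambda>x. pd v \<phi> x *\<^sub>R f x)" by (rule test_integrable[OF test_pd[OF T] assms(2)])
  have i2: "set_integrable lborel \<Omega> (\<lambda>x. \<phi> x *\<^sub>R h x)" by (rule test_integrable[OF T assms(3)])
  have "(LINT x:\<Omega>|lborel. pd v \<phi> x *\<^sub>R Re (f x)) = Re (LINT x:\<Omega>|lborel. pd v \<phi> x *\<^sub>R f x)"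
    using set_Re(2)[OF i1] by simp
  also have "\<dots> = Re (- (LINT x:\<Omega>|lborel. \<phi> x *\<^sub>R h x))" using assms(1) T unfolding weak_pd_def by simp
  also have "\<dots> = - (LINT x:\<Omega>|lborel. \<phi> x *\<^sub>R Re (h x))"
    using set_Re(2)[OF i2] by simp
  finally show "(LINT x:\<Omega>|lborel. pd v \<phi> x *\<^sub>R Re (f x)) = - (LINT x:\<Omega>|lborel. \<phi> x *\<^sub>R Re (h x))" .
qed

lemma weak_Im:
  assumes "weak_pd \<Omega> v f h" "L2_loc \<Omega> f" "L2_loc \<Omega> h"
  shows "weak_pd \<Omega> v (\<lambda>x. Im (f x)) (\<lambda>x. Im (h x))"
  unfolding weak_pd_def
proof (intro allI impI)
  fix \<phi> assume T: "test_fun \<Omega> \<phi>"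
  have i1: "set_integrable lborel \<Omega> (\<lambda>x. pd v \<phi> x *\<^sub>R f x)" by (rule test_integrable[OF test_pd[OF T] assms(2)])
  have i2: "set_integrable lborel \<Omega> (\<lambda>x. \<phi> x *\<^sub>R h x)" by (rule test_integrable[OF T assms(3)])
  have "(LINT x:\<Omega>|lborel. pd v \<phi> x *\<^sub>R Im (f x)) = Im (LINT x:\<Omega>|lborel. pd v \<phi> x *\<^sub>R f x)"
    using set_Im(2)[OF i1] by simp
  also have "\<dots> = Im (- (LINT x:\<Omega>|lborel. \<phi> x *\<^sub>R h x))" using assms(1) T unfolding weak_pd_def by simp
  also have "\<dots> = - (LINT x:\<Omega>|lborel. \<phi> x *\<^sub>R Im (h x))"
    using set_Im(2)[OF i2] by simp
  finally show "(LINT x:\<Omega>|lborel. pd v \<phi> x *\<^sub>R Im (f x)) = - (LINT x:\<Omega>|lborel. \<phi> x *\<^sub>R Im (h x))" .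
qed

lemma mat2_eval:
  "((r *\<^sub>R (vector [vector [a11, a12], vector [a21, a22]] - s *\<^sub>R mat 1) :: real^2^2) *v vector [x, y])
     \<bullet> (vector [p, q] :: real^2) = r * (((a11 - s) * x + a12 * y) * p + (a21 * x + (a22 - s) * y) * q)"
  by (simp add: matrix_vector_mult_def inner_vec_def sum_2 mat_def algebra_simps)

lemma alg_all:
  fixes m n g1 g2 :: complex
  assumes E: "(g1 + \<i> * g2) / 2 = m * ((g1 - \<i> * g2) / 2) + n * cnj ((g1 - \<i> * g2) / 2)"
  shows "((cmod (1 - m))\<^sup>2 - (cmod n)\<^sup>2) * Re g1 + (- 2 * Im (m - n)) * Re g2
           = ((cmod (1 + n))\<^sup>2 - (cmod m)\<^sup>2) * Im g2"
    and "(- 2 * Im (m + n)) * Re g1 + ((cmod (1 + m))\<^sup>2 - (cmod n)\<^sup>2) * Re g2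
           = - ((cmod (1 + n))\<^sup>2 - (cmod m)\<^sup>2) * Im g1"
    and "((cmod (1 - m))\<^sup>2 - (cmod n)\<^sup>2) * Im g1 + (- 2 * Im (m + n)) * Im g2
           = - ((cmod (1 - n))\<^sup>2 - (cmod m)\<^sup>2) * Re g2"
    and "(- 2 * Im (m - n)) * Im g1 + ((cmod (1 + m))\<^sup>2 - (cmod n)\<^sup>2) * Im g2
           = ((cmod (1 - n))\<^sup>2 - (cmod m)\<^sup>2) * Re g1"
proof -
  obtain a b where m: "m = Complex a b" by (cases m)
  obtain c d where n: "n = Complex c d" by (cases n)
  obtain x1 y1 where 1: "g1 = Complex x1 y1" by (cases g1)
  obtain x2 y2 where 2: "g2 = Complex x2 y2" by (cases g2)
  have e1: "x1 - y2 = a*(x1+y2) - b*(y1-x2) + c*(x1+y2) + d*(y1-x2)"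
   and e2: "y1 + x2 = a*(y1-x2) + b*(x1+y2) - c*(y1-x2) + d*(x1+y2)"
    using arg_cong[OF E, of "\<lambda>z. 2 * Re z"] arg_cong[OF E, of "\<lambda>z. 2 * Im z"]
    by (simp_all add: m n 1 2 field_simps)
  have k1: "((1-a)^2+b^2 - c^2-d^2) * x1 + (-2*(b-d)) * x2 = ((1+c)^2 + d^2 - a^2 - b^2) * y2"
    using e1 e2 by algebra
  have k2: "(-2*(b+d)) * x1 + ((1+a)^2+b^2 - c^2-d^2) * x2 = - ((1+c)^2 + d^2 - a^2 - b^2) * y1"
    using e1 e2 by algebra
  have k3: "((1-a)^2+b^2 - c^2-d^2) * y1 + (-2*(b+d)) * y2 = - ((1-c)^2 + d^2 - a^2 - b^2) * x2"
    using e1 e2 by algebra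
  have k4: "(-2*(b-d)) * y1 + ((1+a)^2+b^2 - c^2-d^2) * y2 = ((1-c)^2 + d^2 - a^2 - b^2) * x1"
    using e1 e2 by algebra
  have c1: "(cmod (1 - m))\<^sup>2 = (1-a)^2+b^2" "(cmod (1 + m))\<^sup>2 = (1+a)^2+b^2"
     "(cmod (1 + n))\<^sup>2 = (1+c)^2+d^2" "(cmod (1 - n))\<^sup>2 = (1-c)^2+d^2"
     "(cmod n)\<^sup>2 = c^2+d^2" "(cmod m)\<^sup>2 = a^2+b^2"
    by (simp_all add: m n cmod_power2)
  show "((cmod (1 - m))\<^sup>2 - (cmod n)\<^sup>2) * Re g1 + (- 2 * Im (m - n)) * Re g2
           = ((cmod (1 + n))\<^sup>2 - (cmod m)\<^sup>2) * Im g2"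
    unfolding c1 using k1 by (simp add: m n 1 2 algebra_simps)
  show "(- 2 * Im (m + n)) * Re g1 + ((cmod (1 + m))\<^sup>2 - (cmod n)\<^sup>2) * Re g2
           = - ((cmod (1 + n))\<^sup>2 - (cmod m)\<^sup>2) * Im g1"
    unfolding c1 using k2 by (simp add: m n 1 2 algebra_simps)
  show "((cmod (1 - m))\<^sup>2 - (cmod n)\<^sup>2) * Im g1 + (- 2 * Im (m + n)) * Im g2
           = - ((cmod (1 - n))\<^sup>2 - (cmod m)\<^sup>2) * Re g2"
    unfolding c1 using k3 by (simp add: m n 1 2 algebra_simps)
  show "(- 2 * Im (m - n)) * Im g1 + ((cmod (1 + m))\<^sup>2 - (cmod n)\<^sup>2) * Im g2
           = ((cmod (1 - n))\<^sup>2 - (cmod m)\<^sup>2) * Re g1"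
    unfolding c1 using k4 by (simp add: m n 1 2 algebra_simps)
qed

lemma delta_pos:
  fixes m n :: complex
  assumes "cmod m + cmod n < 1"
  shows "(cmod (1 + n))\<^sup>2 - (cmod m)\<^sup>2 > 0" "(cmod (1 - n))\<^sup>2 - (cmod m)\<^sup>2 > 0"
proof -
  have a: "cmod m < cmod (1 + n)" using norm_triangle_ineq4[of "1 + n" n] assms by simp
  have b: "cmod m < cmod (1 - n)" using norm_triangle_ineq[of "1 - n" n] assms by simp
  show "(cmod (1 + n))\<^sup>2 - (cmod m)\<^sup>2 > 0" using power_strict_mono[OF a, of 2] by simp
  show "(cmod (1 - n))\<^sup>2 - (cmod m)\<^sup>2 > 0" using power_strict_mono[OF b, of 2] by simp
qed

lemma aux1: "(r::real) \<noteq> 0 \<Longrightarrow> 1 / r * ((r * y) * p + (- r * z) * q) = y * p - z * q"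
  by (simp add: field_simps)
lemma aux2: "(r::real) \<noteq> 0 \<Longrightarrow> 1 / r * ((- r * y) * p + (r * z) * q) = z * q - y * p"
  by (simp add: field_simps)

lemma ptB:
  assumes "cmod (\<mu> x) + cmod (\<nu> x) < 1"
    and E: "(a + \<i> * b) / 2 = \<mu> x * ((a - \<i> * b) / 2) + \<nu> x * cnj ((a - \<i> * b) / 2)"
  shows "(Bmat \<mu> \<nu> x *v vector [Re a, Re b]) \<bullet> (vector [p, q] :: real^2) = Im b * p - Im a * q"
proof -
  note D = delta_pos[OF assms(1)]
  show ?thesis unfolding Bmat_def Let_def mat2_eval alg_all(1,2)[OF E]
    by (rule aux1) (use D(1) in linarith)
qed

lemma ptBt:
  assumes "cmod (\<mu> x) + cmod (\<nu> x) < 1"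
    and E: "(a + \<i> * b) / 2 = \<mu> x * ((a - \<i> * b) / 2) + \<nu> x * cnj ((a - \<i> * b) / 2)"
  shows "(Btilde \<mu> \<nu> x *v vector [Im a, Im b]) \<bullet> (vector [p, q] :: real^2) = Re a * q - Re b * p"
proof -
  note D = delta_pos[OF assms(1)]
  show ?thesis unfolding Btilde_def Let_def mat2_eval alg_all(3,4)[OF E]
    by (rule aux2) (use D(2) in linarith)
qed


lemma meas_gen:
  fixes r a11 a12 a21 a22 s a b p q :: "'a \<Rightarrow> real"
  assumes [measurable]: "r \<in> borel_measurable M" "a11 \<in> borel_measurable M" "a12 \<in> borel_measurable M"
    "a21 \<in> borel_measurable M" "a22 \<in> borel_measurable M" "s \<in> borel_measurable M"
    "a \<in> borel_measurable M" "b \<in> borel_measurable M" "p \<in> borel_measurable M" "q \<in> borel_measurable M"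
  shows "(\<lambda>x. r x * (((a11 x - s x) * a x + a12 x * b x) * p x + (a21 x * a x + (a22 x - s x) * b x) * q x))
     \<in> borel_measurable M"
  by measurable

lemma meas_mat:
  fixes r a11 a12 a21 a22 s a b p q :: "'a \<Rightarrow> real"
  assumes "r \<in> borel_measurable M" "a11 \<in> borel_measurable M" "a12 \<in> borel_measurable M"
    "a21 \<in> borel_measurable M" "a22 \<in> borel_measurable M" "s \<in> borel_measurable M"
    "a \<in> borel_measurable M" "b \<in> borel_measurable M" "p \<in> borel_measurable M" "q \<in> borel_measurable M"
  shows "(\<lambda>x. (((r x *\<^sub>R (vector [vector [a11 x, a12 x], vector [a21 x, a22 x]] - s x *\<^sub>R mat 1)) :: real^2^2)
     *v vector [a x, b x]) \<bullet> (vector [p x, q x] :: real^2)) \<in> borel_measurable M"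
  unfolding mat2_eval by (rule meas_gen[OF assms])

lemma meas_B:
  fixes m n :: "complex \<Rightarrow> complex" and a b p q :: "complex \<Rightarrow> real"
  assumes [measurable]: "m \<in> borel_measurable borel" "n \<in> borel_measurable borel"
    and ab: "a \<in> borel_measurable borel" "b \<in> borel_measurable borel"
    "p \<in> borel_measurable borel" "q \<in> borel_measurable borel"
  shows "(\<lambda>x. (Bmat m n x *v vector [a x, b x]) \<bullet> (vector [p x, q x] :: real^2)) \<in> borel_measurable borel"
    and "(\<lambda>x. (Btilde m n x *v vector [a x, b x]) \<bullet> (vector [p x, q x] :: real^2)) \<in> borel_measurable borel"
proof -
  have f1: "(\<lambda>x. 1 / ((cmod (1 + n x))\<^sup>2 - (cmod (m x))\<^sup>2)) \<in> borel_measurable borel" by measurable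
  have f2: "(\<lambda>x. 1 / ((cmod (1 - n x))\<^sup>2 - (cmod (m x))\<^sup>2)) \<in> borel_measurable borel" by measurable
  have f3: "(\<lambda>x. (cmod (1 - m x))\<^sup>2) \<in> borel_measurable borel" by measurable
  have f4: "(\<lambda>x. (cmod (1 + m x))\<^sup>2) \<in> borel_measurable borel" by measurable
  have f5: "(\<lambda>x. (cmod (n x))\<^sup>2) \<in> borel_measurable borel" by measurable
  have f6: "(\<lambda>x. - 2 * Im (m x - n x)) \<in> borel_measurable borel" by measurable
  have f7: "(\<lambda>x. - 2 * Im (m x + n x)) \<in> borel_measurable borel" by measurable
  show "(\<lambda>x. (Bmat m n x *v vector [a x, b x]) \<bullet> (vector [p x, q x] :: real^2)) \<in> borel_measurable borel"
    unfolding Bmat_def Let_def by (rule meas_mat[OF f1 f3 f6 f7 f4 f5 ab])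
  show "(\<lambda>x. (Btilde m n x *v vector [a x, b x]) \<bullet> (vector [p x, q x] :: real^2)) \<in> borel_measurable borel"
    unfolding Btilde_def Let_def by (rule meas_mat[OF f2 f3 f7 f6 f4 f5 ab])
qed

lemma meas_on:
  fixes \<mu> \<nu> g1 g2 :: "complex \<Rightarrow> complex" and p q :: "complex \<Rightarrow> real"
  assumes O: "open \<Omega>"
    and m: "set_borel_measurable lborel \<Omega> \<mu>" "set_borel_measurable lborel \<Omega> \<nu>"
      "set_borel_measurable lborel \<Omega> g1" "set_borel_measurable lborel \<Omega> g2"
    and pq: "p \<in> borel_measurable borel" "q \<in> borel_measurable borel"
  shows "set_borel_measurable lborel \<Omega> (\<lambda>x. (Bmat \<mu> \<nu> x *v vector [Re (g1 x), Re (g2 x)]) \<bullet> (vector [p x, q x] :: real^2))"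
    and "set_borel_measurable lborel \<Omega> (\<lambda>x. (Btilde \<mu> \<nu> x *v vector [Im (g1 x), Im (g2 x)]) \<bullet> (vector [p x, q x] :: real^2))"
proof -
  define \<mu>' where "\<mu>' = (\<lambda>x. indicator \<Omega> x *\<^sub>R \<mu> x)"
  define \<nu>' where "\<nu>' = (\<lambda>x. indicator \<Omega> x *\<^sub>R \<nu> x)"
  define h1 where "h1 = (\<lambda>x. indicator \<Omega> x *\<^sub>R g1 x)"
  define h2 where "h2 = (\<lambda>x. indicator \<Omega> x *\<^sub>R g2 x)"
  have mm: "\<mu>' \<in> borel_measurable borel" "\<nu>' \<in> borel_measurable borel"
     "h1 \<in> borel_measurable borel" "h2 \<in> borel_measurable borel"
    using m unfolding set_borel_measurable_def \<mu>'_def \<nu>'_def h1_def h2_def by simp_all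
  have Om[measurable]: "\<Omega> \<in> sets borel" using O by simp
  have r: "(\<lambda>x. Re (h1 x)) \<in> borel_measurable borel" "(\<lambda>x. Re (h2 x)) \<in> borel_measurable borel"
     "(\<lambda>x. Im (h1 x)) \<in> borel_measurable borel" "(\<lambda>x. Im (h2 x)) \<in> borel_measurable borel"
    using mm by measurable
  have f1: "(\<lambda>x. (Bmat \<mu>' \<nu>' x *v vector [Re (h1 x), Re (h2 x)]) \<bullet> (vector [p x, q x] :: real^2)) \<in> borel_measurable borel"
    by (rule meas_B(1)[OF mm(1,2) r(1,2) pq])
  have f2: "(\<lambda>x. (Btilde \<mu>' \<nu>' x *v vector [Im (h1 x), Im (h2 x)]) \<bullet> (vector [p x, q x] :: real^2)) \<in> borel_measurable borel"
    by (rule meas_B(2)[OF mm(1,2) r(3,4) pq])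
  have e1: "(\<lambda>x. indicator \<Omega> x *\<^sub>R ((Bmat \<mu> \<nu> x *v vector [Re (g1 x), Re (g2 x)]) \<bullet> (vector [p x, q x] :: real^2)))
     = (\<lambda>x. indicator \<Omega> x *\<^sub>R ((Bmat \<mu>' \<nu>' x *v vector [Re (h1 x), Re (h2 x)]) \<bullet> (vector [p x, q x] :: real^2)))"
  proof (intro ext)
    fix x show "indicator \<Omega> x *\<^sub>R ((Bmat \<mu> \<nu> x *v vector [Re (g1 x), Re (g2 x)]) \<bullet> (vector [p x, q x] :: real^2))
     = indicator \<Omega> x *\<^sub>R ((Bmat \<mu>' \<nu>' x *v vector [Re (h1 x), Re (h2 x)]) \<bullet> (vector [p x, q x] :: real^2))"
    proof (cases "x \<in> \<Omega>")
      case True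
      then have "\<mu>' x = \<mu> x" "\<nu>' x = \<nu> x" "h1 x = g1 x" "h2 x = g2 x"
        by (simp_all add: \<mu>'_def \<nu>'_def h1_def h2_def)
      then have "Bmat \<mu>' \<nu>' x = Bmat \<mu> \<nu> x" "h1 x = g1 x" "h2 x = g2 x"
        unfolding Bmat_def by (simp_all only:)
      then show ?thesis by (simp only:)
    next
      case False
      then have "indicator \<Omega> x = (0::real)" by (simp add: indicator_def)
      then show ?thesis by (simp only: scaleR_zero_left)
    qed
  qed
  have e2: "(\<lambda>x. indicator \<Omega> x *\<^sub>R ((Btilde \<mu> \<nu> x *v vector [Im (g1 x), Im (g2 x)]) \<bullet> (vector [p x, q x] :: real^2)))
     = (\<lambda>x. indicator \<Omega> x *\<^sub>R ((Btilde \<mu>' \<nu>' x *v vector [Im (h1 x), Im (h2 x)]) \<bullet> (vector [p x, q x] :: real^2)))"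
  proof (intro ext)
    fix x show "indicator \<Omega> x *\<^sub>R ((Btilde \<mu> \<nu> x *v vector [Im (g1 x), Im (g2 x)]) \<bullet> (vector [p x, q x] :: real^2))
     = indicator \<Omega> x *\<^sub>R ((Btilde \<mu>' \<nu>' x *v vector [Im (h1 x), Im (h2 x)]) \<bullet> (vector [p x, q x] :: real^2))"
    proof (cases "x \<in> \<Omega>")
      case True
      then have "\<mu>' x = \<mu> x" "\<nu>' x = \<nu> x" "h1 x = g1 x" "h2 x = g2 x"
        by (simp_all add: \<mu>'_def \<nu>'_def h1_def h2_def)
      then have "Btilde \<mu>' \<nu>' x = Btilde \<mu> \<nu> x" "h1 x = g1 x" "h2 x = g2 x"
        unfolding Btilde_def by (simp_all only:)
      then show ?thesis by (simp only:)
    next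
      case False
      then have "indicator \<Omega> x = (0::real)" by (simp add: indicator_def)
      then show ?thesis by (simp only: scaleR_zero_left)
    qed
  qed
  show "set_borel_measurable lborel \<Omega> (\<lambda>x. (Bmat \<mu> \<nu> x *v vector [Re (g1 x), Re (g2 x)]) \<bullet> (vector [p x, q x] :: real^2))"
    unfolding set_borel_measurable_def e1 measurable_lborel2
    by (rule borel_measurable_scaleR[OF borel_measurable_indicator[OF Om] f1])
  show "set_borel_measurable lborel \<Omega> (\<lambda>x. (Btilde \<mu> \<nu> x *v vector [Im (g1 x), Im (g2 x)]) \<bullet> (vector [p x, q x] :: real^2))"
    unfolding set_borel_measurable_def e2 measurable_lborel2
    by (rule borel_measurable_scaleR[OF borel_measurable_indicator[OF Om] f2])
qed


theorem lemma4:
  fixes \<Omega> :: "complex set" and g g1 g2 \<mu> \<nu> :: "complex \<Rightarrow> complex" and \<kappa> :: real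
  assumes "open \<Omega>"
    and "W12_loc \<Omega> g g1 g2"
    and "set_borel_measurable lborel \<Omega> \<mu>" and "set_borel_measurable lborel \<Omega> \<nu>"
    and "\<exists>C. AE x in lborel. x \<in> \<Omega> \<longrightarrow> cmod (\<mu> x) \<le> C \<and> cmod (\<nu> x) \<le> C"
    and "AE x in lborel. x \<in> \<Omega> \<longrightarrow> cmod (\<mu> x) + cmod (\<nu> x) \<le> \<kappa>"
    and "\<kappa> < 1"
    and "AE x in lborel. x \<in> \<Omega> \<longrightarrow>
           (g1 x + \<i> * g2 x) / 2 = \<mu> x * ((g1 x - \<i> * g2 x) / 2) + \<nu> x * cnj ((g1 x - \<i> * g2 x) / 2)"
  shows "weak_solution \<Omega> (Bmat \<mu> \<nu>) (\<lambda>x. Re (g x)) \<and> weak_solution \<Omega> (Btilde \<mu> \<nu>) (\<lambda>x. Im (g x))"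
proof -
  have Lg: "L2_loc \<Omega> g" and L1: "L2_loc \<Omega> g1" and L2: "L2_loc \<Omega> g2"
    and W1: "weak_pd \<Omega> 1 g g1" and W2: "weak_pd \<Omega> \<i> g g2"
    using assms(2) unfolding W12_loc_def by auto
  have AEk: "AE x in lborel. x \<in> \<Omega> \<longrightarrow> cmod (\<mu> x) + cmod (\<nu> x) < 1 \<and>
     (g1 x + \<i> * g2 x) / 2 = \<mu> x * ((g1 x - \<i> * g2 x) / 2) + \<nu> x * cnj ((g1 x - \<i> * g2 x) / 2)"
    using assms(6,8)
  proof eventually_elim
    case (elim x)
    show ?case
    proof
      assume "x \<in> \<Omega>"
      then show "cmod (\<mu> x) + cmod (\<nu> x) < 1 \<and>
     (g1 x + \<i> * g2 x) / 2 = \<mu> x * ((g1 x - \<i> * g2 x) / 2) + \<nu> x * cnj ((g1 x - \<i> * g2 x) / 2)"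
        using elim assms(7) by auto
    qed
  qed
  have mg1: "set_borel_measurable lborel \<Omega> g1" and mg2: "set_borel_measurable lborel \<Omega> g2"
    using L1 L2 unfolding L2_loc_def by auto
  have key: "set_integrable lborel \<Omega> (\<lambda>x. pd 1 \<phi> x *\<^sub>R g2 x)
     \<and> set_integrable lborel \<Omega> (\<lambda>x. pd \<i> \<phi> x *\<^sub>R g1 x)
     \<and> (LINT x:\<Omega>|lborel. pd 1 \<phi> x *\<^sub>R g2 x) = (LINT x:\<Omega>|lborel. pd \<i> \<phi> x *\<^sub>R g1 x)"
    if T: "test_fun \<Omega> \<phi>" for \<phi>
  proof (intro conjI)
    show "set_integrable lborel \<Omega> (\<lambda>x. pd 1 \<phi> x *\<^sub>R g2 x)" by (rule test_integrable[OF test_pd[OF T] L2])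
    show "set_integrable lborel \<Omega> (\<lambda>x. pd \<i> \<phi> x *\<^sub>R g1 x)" by (rule test_integrable[OF test_pd[OF T] L1])
    have sm: "smooth_fun \<phi>" using T unfolding test_fun_def by auto
    have a: "(LINT x:\<Omega>|lborel. pd \<i> (pd 1 \<phi>) x *\<^sub>R g x) = - (LINT x:\<Omega>|lborel. pd 1 \<phi> x *\<^sub>R g2 x)"
      using W2 test_pd[OF T] unfolding weak_pd_def by blast
    have b: "(LINT x:\<Omega>|lborel. pd 1 (pd \<i> \<phi>) x *\<^sub>R g x) = - (LINT x:\<Omega>|lborel. pd \<i> \<phi> x *\<^sub>R g1 x)"
      using W1 test_pd[OF T] unfolding weak_pd_def by blast
    have "pd \<i> (pd 1 \<phi>) = pd 1 (pd \<i> \<phi>)" using clairaut[OF sm] by auto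
    then show "(LINT x:\<Omega>|lborel. pd 1 \<phi> x *\<^sub>R g2 x) = (LINT x:\<Omega>|lborel. pd \<i> \<phi> x *\<^sub>R g1 x)"
      using a b by simp
  qed
  have pm: "pd v \<phi> \<in> borel_measurable borel" if T: "test_fun \<Omega> \<phi>" for v \<phi>
    using test_pd[OF T, of v] smooth_cont borel_measurable_continuous_onI unfolding test_fun_def by blast
  have S1: "weak_solution \<Omega> (Bmat \<mu> \<nu>) (\<lambda>x. Re (g x))"
    unfolding weak_solution_def
  proof (intro exI conjI allI impI)
    show "W12_loc \<Omega> (\<lambda>x. Re (g x)) (\<lambda>x. Re (g1 x)) (\<lambda>x. Re (g2 x))"
      unfolding W12_loc_def using L2_Re[OF Lg] L2_Re[OF L1] L2_Re[OF L2]
        weak_Re[OF W1 Lg L1] weak_Re[OF W2 Lg L2] by auto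
    fix \<phi> assume T: "test_fun \<Omega> \<phi>"
    define F where "F = (\<lambda>x. (Bmat \<mu> \<nu> x *v vector [Re (g1 x), Re (g2 x)]) \<bullet> (vector [pd 1 \<phi> x, pd \<i> \<phi> x] :: real^2))"
    define G where "G = (\<lambda>x. Im (pd 1 \<phi> x *\<^sub>R g2 x - pd \<i> \<phi> x *\<^sub>R g1 x))"
    note K = key[OF T]
    have iG: "set_integrable lborel \<Omega> G" unfolding G_def
      by (rule set_Im(1)) (use K in auto)
    have lG: "(LINT x:\<Omega>|lborel. G x) = 0" unfolding G_def
      using set_Im(2)[of lborel \<Omega> "\<lambda>x. pd 1 \<phi> x *\<^sub>R g2 x - pd \<i> \<phi> x *\<^sub>R g1 x"] K by simp
    have mF: "set_borel_measurable lborel \<Omega> F" unfolding F_def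
      by (rule meas_on(1)[OF assms(1) assms(3,4) mg1 mg2 pm[OF T] pm[OF T]])
    have mG: "set_borel_measurable lborel \<Omega> G"
      using iG unfolding set_integrable_def set_borel_measurable_def by auto
    have ae: "AE x in lborel. indicator \<Omega> x *\<^sub>R G x = indicator \<Omega> x *\<^sub>R F x"
      using AEk
    proof eventually_elim
      case (elim x)
      show ?case
      proof (cases "x \<in> \<Omega>")
        case True
        then show ?thesis using elim ptB[of \<mu> x \<nu> "g1 x" "g2 x" "pd 1 \<phi> x" "pd \<i> \<phi> x"]
          by (simp add: F_def G_def)
      qed simp
    qed
    have iF: "set_integrable lborel \<Omega> F"
      unfolding set_integrable_def
      by (rule integrable_cong_AE_imp[OF iG[unfolded set_integrable_def] mF[unfolded set_borel_measurable_def] ae])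
    have "(LINT x:\<Omega>|lborel. G x) = (LINT x:\<Omega>|lborel. F x)"
      unfolding set_lebesgue_integral_def
      by (rule integral_cong_AE[OF mG[unfolded set_borel_measurable_def] mF[unfolded set_borel_measurable_def] ae])
    then show "let F = (\<lambda>x. (Bmat \<mu> \<nu> x *v vector [Re (g1 x), Re (g2 x)]) \<bullet> (vector [pd 1 \<phi> x, pd \<i> \<phi> x] :: real^2))
         in set_integrable lborel \<Omega> F \<and> (LINT x:\<Omega>|lborel. F x) = 0"
      using iF lG unfolding F_def Let_def by simp
  qed
  have S2: "weak_solution \<Omega> (Btilde \<mu> \<nu>) (\<lambda>x. Im (g x))"
    unfolding weak_solution_def
  proof (intro exI conjI allI impI)
    show "W12_loc \<Omega> (\<lambda>x. Im (g x)) (\<lambda>x. Im (g1 x)) (\<lambda>x. Im (g2 x))"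
      unfolding W12_loc_def using L2_Im[OF Lg] L2_Im[OF L1] L2_Im[OF L2]
        weak_Im[OF W1 Lg L1] weak_Im[OF W2 Lg L2] by auto
    fix \<phi> assume T: "test_fun \<Omega> \<phi>"
    define F where "F = (\<lambda>x. (Btilde \<mu> \<nu> x *v vector [Im (g1 x), Im (g2 x)]) \<bullet> (vector [pd 1 \<phi> x, pd \<i> \<phi> x] :: real^2))"
    define G where "G = (\<lambda>x. Re (pd \<i> \<phi> x *\<^sub>R g1 x - pd 1 \<phi> x *\<^sub>R g2 x))"
    note K = key[OF T]
    have iG: "set_integrable lborel \<Omega> G" unfolding G_def
      by (rule set_Re(1)) (use K in auto)
    have lG: "(LINT x:\<Omega>|lborel. G x) = 0" unfolding G_def
      using set_Re(2)[of lborel \<Omega> "\<lambda>x. pd \<i> \<phi> x *\<^sub>R g1 x - pd 1 \<phi> x *\<^sub>R g2 x"] K by simp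
    have mF: "set_borel_measurable lborel \<Omega> F" unfolding F_def
      by (rule meas_on(2)[OF assms(1) assms(3,4) mg1 mg2 pm[OF T] pm[OF T]])
    have mG: "set_borel_measurable lborel \<Omega> G"
      using iG unfolding set_integrable_def set_borel_measurable_def by auto
    have ae: "AE x in lborel. indicator \<Omega> x *\<^sub>R G x = indicator \<Omega> x *\<^sub>R F x"
      using AEk
    proof eventually_elim
      case (elim x)
      show ?case
      proof (cases "x \<in> \<Omega>")
        case True
        then show ?thesis using elim ptBt[of \<mu> x \<nu> "g1 x" "g2 x" "pd 1 \<phi> x" "pd \<i> \<phi> x"]
          by (simp add: F_def G_def)
      qed simp
    qed
    have iF: "set_integrable lborel \<Omega> F"
      unfolding set_integrable_def
      by (rule integrable_cong_AE_imp[OF iG[unfolded set_integrable_def] mF[unfolded set_borel_measurable_def] ae])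
    have "(LINT x:\<Omega>|lborel. G x) = (LINT x:\<Omega>|lborel. F x)"
      unfolding set_lebesgue_integral_def
      by (rule integral_cong_AE[OF mG[unfolded set_borel_measurable_def] mF[unfolded set_borel_measurable_def] ae])
    then show "let F = (\<lambda>x. (Btilde \<mu> \<nu> x *v vector [Im (g1 x), Im (g2 x)]) \<bullet> (vector [pd 1 \<phi> x, pd \<i> \<phi> x] :: real^2))
         in set_integrable lborel \<Omega> F \<and> (LINT x:\<Omega>|lborel. F x) = 0"
      using iF lG unfolding F_def Let_def by simp
  qed
  show ?thesis using S1 S2 by blast
qed


end
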